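(* Let $\delta>0$, let $X$ be a geodesic $\delta$--hyperbolic space on which a group $G$ acts by isometries, let $U\subset G$ be finite, let $x_0\in X$ satisfy $\frac1{|U|}\sum_{u\in U}|ux_0-x_0|\leqslant E(U)+\delta$, and let $d$ be either $1$ or $\log_2(2|U|)$. Let $y_0\in S(x_0,1000d\delta)$ and let $B(y_0,100d\delta)$ be the closed ball of radius $100d\delta$ about $y_0$. Then $$\left|\bigcup_{y,z\in B(y_0,100d\delta)\cap S(x_0,1000d\delta)}U_{y,z}\right|\leqslant\frac23|U|.$$
   Context: Distance $|x-y|$; Gromov product $(p,q)_x=\frac12(|p-x|+|q-x|-|p-q|)$; $X$ is $\delta$--hyperbolic if $(p,r)_x\geqslant\min\{(p,q)_x,(q,r)_x\}-\delta$ for all $p,q,r,x$. $E(U):=\inf_{x\in X}\frac1{|U|}\sum_{u\in U}|ux-x|$. $S(x_0,R):=\{x\mid|x-x_0|=R\}$. For $y,z\in S(x_0,1000d\delta)$, $U_{y,z}:=\{u\in U\mid |ux_0-x_0|\geqslant4000d\delta,\ (x_0,ux_0)_y\leqslant d\delta,\ (x_0,u^{-1}x_0)_z\leqslant d\delta\}$. *)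

theory Defs
  imports "HOL-Analysis.Analysis" "HOL-Algebra.Group_Action"
begin

definition gromov_product :: "'a::metric_space \<Rightarrow> 'a \<Rightarrow> 'a \<Rightarrow> real" where
  "gromov_product p q x = (dist p x + dist q x - dist p q) / 2"

definition delta_hyperbolic :: "real \<Rightarrow> 'a::metric_space itself \<Rightarrow> bool" where
  "delta_hyperbolic \<delta> _ \<longleftrightarrow>
     (\<forall>p q r x :: 'a. gromov_product p r x \<ge> min (gromov_product p q x) (gromov_product q r x) - \<delta>)"

definition geodesic_space :: "'a::metric_space itself \<Rightarrow> bool" where
  "geodesic_space _ \<longleftrightarrow>
     (\<forall>x y :: 'a. \<exists>\<gamma> :: real \<Rightarrow> 'a. \<gamma> 0 = x \<and> \<gamma> (dist x y) = y \<and>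
        (\<forall>s\<in>{0..dist x y}. \<forall>t\<in>{0..dist x y}. dist (\<gamma> s) (\<gamma> t) = \<bar>s - t\<bar>))"

definition isometric_action :: "('g, 'b) monoid_scheme \<Rightarrow> ('g \<Rightarrow> 'a::metric_space \<Rightarrow> 'a) \<Rightarrow> bool" where
  "isometric_action G \<phi> \<longleftrightarrow> group G \<and> group_action G UNIV \<phi> \<and>
     (\<forall>g\<in>carrier G. \<forall>x y. dist (\<phi> g x) (\<phi> g y) = dist x y)"

definition energy :: "('g \<Rightarrow> 'a::metric_space \<Rightarrow> 'a) \<Rightarrow> 'g set \<Rightarrow> real" where
  "energy \<phi> U = (INF x. (\<Sum>u\<in>U. dist (\<phi> u x) x) / real (card U))"

definition sphere_at :: "'a::metric_space \<Rightarrow> real \<Rightarrow> 'a set" where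
  "sphere_at x0 R = {x. dist x x0 = R}"

definition U_yz :: "('g, 'b) monoid_scheme \<Rightarrow> ('g \<Rightarrow> 'a::metric_space \<Rightarrow> 'a) \<Rightarrow> 'g set
    \<Rightarrow> 'a \<Rightarrow> real \<Rightarrow> real \<Rightarrow> 'a \<Rightarrow> 'a \<Rightarrow> 'g set" where
  "U_yz G \<phi> U x0 d \<delta> y z = {u\<in>U. dist (\<phi> u x0) x0 \<ge> 4000 * d * \<delta> \<and>
      gromov_product x0 (\<phi> u x0) y \<le> d * \<delta> \<and>
      gromov_product x0 (\<phi> (inv\<^bsub>G\<^esub> u) x0) z \<le> d * \<delta>}"

end

theory Submission
  imports Defs
begin

lemma act_inv:
  assumes "isometric_action G \<phi>" "u \<in> carrier G"
  shows "\<phi> u (\<phi> (inv\<^bsub>G\<^esub> u) x) = x"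
proof -
  have gr: "group G" and ga: "group_action G UNIV \<phi>" using assms(1) unfolding isometric_action_def by auto
  have iu: "inv\<^bsub>G\<^esub> u \<in> carrier G" using gr assms(2) by (simp add: group.inv_closed)
  have "\<phi> u (\<phi> (inv\<^bsub>G\<^esub> u) x) = \<phi> (u \<otimes>\<^bsub>G\<^esub> inv\<^bsub>G\<^esub> u) x"
    using group_action.composition_rule[OF ga, of x u "inv\<^bsub>G\<^esub> u"] iu assms(2) by simp
  also have "\<dots> = \<phi> \<one>\<^bsub>G\<^esub> x" using gr assms(2) by (simp add: group.r_inv)
  also have "\<dots> = x" using group_action.id_eq_one[OF ga] by (metis UNIV_I restrict_apply')
  finally show ?thesis .
qed

lemma key_metric:
  fixes x0 p y w y0 v :: "'a::metric_space"
  assumes hyp: "delta_hyperbolic \<delta> TYPE('a)"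
    and "dist y x0 = R" "dist y y0 \<le> 100*d*\<delta>" "gromov_product x0 p y \<le> d*\<delta>"
    and "dist p w = R" "dist w v \<le> 100*d*\<delta>" "gromov_product p x0 w \<le> d*\<delta>"
    and "dist x0 p \<ge> 4*R" "R \<ge> 0" "dist v y0 \<le> dist v w + dist w y + dist y y0"
  shows "dist v y0 \<le> dist p x0 - 2*R + 204*d*\<delta> + 2*\<delta>"
proof -
  have H: "gromov_product y w x0 \<ge> min (gromov_product y p x0) (gromov_product p w x0) - \<delta>"
    using hyp unfolding delta_hyperbolic_def by blast
  have t1: "dist x0 p \<le> dist x0 w + dist w p" by (rule dist_triangle)
  have "gromov_product y p x0 \<ge> R - d*\<delta>" using assms(2,4) unfolding gromov_product_def
    by (simp add: dist_commute)
  moreover have "gromov_product p w x0 \<ge> R - d*\<delta>" using assms(5,7,8,9) t1 unfolding gromov_product_def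
    by (simp add: dist_commute)
  ultimately have "gromov_product y w x0 \<ge> R - d*\<delta> - \<delta>" using H by linarith
  hence a: "dist y w \<le> dist w x0 - R + 2*d*\<delta> + 2*\<delta>" using assms(2) unfolding gromov_product_def by simp
  have b: "dist x0 w \<le> dist x0 p - R + 2*d*\<delta>" using assms(5,7) unfolding gromov_product_def
    by (simp add: dist_commute)
  show ?thesis using a b assms(3,6,10) by (simp add: dist_commute)
qed

theorem lemma6p2:
  fixes \<delta> d :: real and G :: "('g, 'b) monoid_scheme" and \<phi> :: "'g \<Rightarrow> 'a::metric_space \<Rightarrow> 'a"
    and U :: "'g set" and x0 y0 :: 'a
  assumes "\<delta> > 0"
    and "geodesic_space TYPE('a)"
    and "delta_hyperbolic \<delta> TYPE('a)"
    and "isometric_action G \<phi>"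
    and "U \<subseteq> carrier G" and "finite U" and "U \<noteq> {}"
    and "(\<Sum>u\<in>U. dist (\<phi> u x0) x0) / real (card U) \<le> energy \<phi> U + \<delta>"
    and "d = 1 \<or> d = log 2 (2 * real (card U))"
    and "y0 \<in> sphere_at x0 (1000 * d * \<delta>)"
  shows "real (card (\<Union>y\<in>cball y0 (100 * d * \<delta>) \<inter> sphere_at x0 (1000 * d * \<delta>).
                     \<Union>z\<in>cball y0 (100 * d * \<delta>) \<inter> sphere_at x0 (1000 * d * \<delta>).
                       U_yz G \<phi> U x0 d \<delta> y z))
         \<le> 2 / 3 * real (card U)"
proof (rule ccontr)
  define W where "W = (\<Union>y\<in>cball y0 (100 * d * \<delta>) \<inter> sphere_at x0 (1000 * d * \<delta>).
                     \<Union>z\<in>cball y0 (100 * d * \<delta>) \<inter> sphere_at x0 (1000 * d * \<delta>).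
                       U_yz G \<phi> U x0 d \<delta> y z)"
  define R where "R = 1000 * d * \<delta>"
  define n where "n = real (card U)"
  assume "\<not> real (card (\<Union>y\<in>cball y0 (100 * d * \<delta>) \<inter> sphere_at x0 (1000 * d * \<delta>).
                     \<Union>z\<in>cball y0 (100 * d * \<delta>) \<inter> sphere_at x0 (1000 * d * \<delta>).
                       U_yz G \<phi> U x0 d \<delta> y z)) \<le> 2 / 3 * real (card U)"
  hence kbig: "real (card W) > 2/3 * n" unfolding W_def n_def by linarith
  have npos: "n > 0" using assms(6,7) unfolding n_def by (simp add: card_gt_0_iff)
  have "card U \<ge> 1" using assms(6,7) by (simp add: Suc_leI card_gt_0_iff)
  hence d1: "d \<ge> 1" using assms(9) by auto
  have Rnn: "R \<ge> 0" using d1 assms(1) unfolding R_def by simp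
  have WU: "W \<subseteq> U" unfolding W_def U_yz_def by auto
  have iso: "\<And>g a b. g \<in> carrier G \<Longrightarrow> dist (\<phi> g a) (\<phi> g b) = dist a b"
    using assms(4) unfolding isometric_action_def by blast
  have y0R: "dist y0 x0 = R" using assms(10) unfolding sphere_at_def R_def by simp
  define D where "D u = dist (\<phi> u x0) x0" for u
  define F where "F u = dist (\<phi> u y0) y0" for u
  have gen: "F u \<le> D u + 2*R" if "u \<in> U" for u
  proof -
    have "F u \<le> dist (\<phi> u y0) (\<phi> u x0) + dist (\<phi> u x0) x0 + dist x0 y0"
      unfolding F_def by (metis add.commute add_le_cancel_left dist_triangle dist_triangle_le order.trans)
    thus ?thesis using iso[of u y0 x0] that assms(5) y0R unfolding D_def by (auto simp: dist_commute)
  qed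
  have good: "F u \<le> D u - 2*R + 206*d*\<delta>" if "u \<in> W" for u
  proof -
    obtain y z where y: "y \<in> cball y0 (100 * d * \<delta>)" "dist y x0 = R"
      and z: "z \<in> cball y0 (100 * d * \<delta>)" "dist z x0 = R"
      and uin: "u \<in> U_yz G \<phi> U x0 d \<delta> y z"
      using \<open>u \<in> W\<close> unfolding W_def sphere_at_def R_def by blast
    have uU: "u \<in> U" and uG: "u \<in> carrier G" and D4: "D u \<ge> 4*R"
      and g1: "gromov_product x0 (\<phi> u x0) y \<le> d*\<delta>"
      and g2: "gromov_product x0 (\<phi> (inv\<^bsub>G\<^esub> u) x0) z \<le> d*\<delta>"
      using uin assms(5) unfolding U_yz_def D_def R_def by auto
    have ai: "\<phi> u (\<phi> (inv\<^bsub>G\<^esub> u) x0) = x0" using act_inv[OF assms(4) uG] .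
    have e1: "dist x0 z = dist (\<phi> u x0) (\<phi> u z)" using iso[OF uG] by simp
    have e2: "dist (\<phi> (inv\<^bsub>G\<^esub> u) x0) z = dist x0 (\<phi> u z)"
      using iso[OF uG, of "\<phi> (inv\<^bsub>G\<^esub> u) x0" z] ai by simp
    have e3: "dist x0 (\<phi> (inv\<^bsub>G\<^esub> u) x0) = dist (\<phi> u x0) x0"
      using iso[OF uG, of x0 "\<phi> (inv\<^bsub>G\<^esub> u) x0"] ai by simp
    have g2': "gromov_product (\<phi> u x0) x0 (\<phi> u z) \<le> d*\<delta>"
      using g2 e1 e2 e3 unfolding gromov_product_def by (simp add: dist_commute)
    have pw: "dist (\<phi> u x0) (\<phi> u z) = R" using e1 z(2) by (simp add: dist_commute)
    have wv: "dist (\<phi> u z) (\<phi> u y0) \<le> 100*d*\<delta>" using iso[OF uG] z(1) by (simp add: dist_commute)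
    have tri: "dist (\<phi> u y0) y0 \<le> dist (\<phi> u y0) (\<phi> u z) + dist (\<phi> u z) y + dist y y0"
      by (metis add.commute add_le_cancel_left dist_triangle dist_triangle_le order.trans)
    have "F u \<le> dist (\<phi> u x0) x0 - 2*R + 204*d*\<delta> + 2*\<delta>"
      unfolding F_def
      apply (rule key_metric[OF assms(3) y(2) _ g1 pw wv g2' _ Rnn tri])
      using y(1) D4 unfolding D_def by (auto simp: dist_commute)
    moreover have "\<delta> \<le> d*\<delta>" using d1 assms(1) by simp
    ultimately show ?thesis unfolding D_def by linarith
  qed
  have fW: "finite W" using WU assms(6) finite_subset by blast
  have "(\<Sum>u\<in>U. F u) = (\<Sum>u\<in>W. F u) + (\<Sum>u\<in>U-W. F u)"
    using WU assms(6) by (metis add.commute sum.subset_diff)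
  also have "\<dots> \<le> (\<Sum>u\<in>W. D u - 2*R + 206*d*\<delta>) + (\<Sum>u\<in>U-W. D u + 2*R)"
    using good gen by (intro add_mono sum_mono) auto
  also have "\<dots> = (\<Sum>u\<in>U. D u) + 2*R*n - real (card W) * (4*R - 206*d*\<delta>)"
  proof -
    have c: "card (U - W) = card U - card W" using WU fW by (simp add: card_Diff_subset)
    have cl: "card W \<le> card U" using WU assms(6) by (simp add: card_mono)
    have s: "(\<Sum>u\<in>U. D u) = (\<Sum>u\<in>W. D u) + (\<Sum>u\<in>U-W. D u)"
      using WU assms(6) by (metis add.commute sum.subset_diff)
    show ?thesis using c cl unfolding s n_def by (simp add: sum.distrib sum_subtractf of_nat_diff algebra_simps)
  qed
  also have "\<dots> \<le> (\<Sum>u\<in>U. D u) + 2*R*n - 2/3*n * (4*R - 206*d*\<delta>)"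
    using kbig d1 assms(1) unfolding R_def by (intro diff_left_mono mult_right_mono) auto
  also have "\<dots> = (\<Sum>u\<in>U. D u) - n * (1588/3*d*\<delta>)" unfolding R_def by (simp add: algebra_simps)
  finally have S: "(\<Sum>u\<in>U. F u) \<le> (\<Sum>u\<in>U. D u) - n * (1588/3*d*\<delta>)" .
  have "energy \<phi> U \<le> (\<Sum>u\<in>U. F u) / n"
    unfolding energy_def F_def n_def
    by (rule cINF_lower) (auto intro!: bdd_belowI2[where m=0] divide_nonneg_nonneg sum_nonneg)
  also have "\<dots> \<le> (\<Sum>u\<in>U. D u) / n - 1588/3*d*\<delta>"
    using S npos by (simp add: field_simps)
  finally have "energy \<phi> U \<le> (\<Sum>u\<in>U. D u) / n - 1588/3*d*\<delta>" .
  moreover have "(\<Sum>u\<in>U. D u) / n \<le> energy \<phi> U + \<delta>" using assms(8) unfolding D_def n_def .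
  moreover have "\<delta> \<le> d*\<delta>" using d1 assms(1) by simp
  ultimately show False using assms(1) by linarith
qed

end
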